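(* Let $\Sigma$ be the signature consisting of two non-rigid constant symbols $a,b$. For $n\in\mathbb N$ let $\chi_n$ be a classical first-order sentence (in the pure language of equality) expressing that the domain has at least $n$ elements, and let $X=\{\chi_n\mid n\in\mathbb N\}$. Let $\eta := \big(\mathrm{dep}(a,b)\wedge \mathrm{dep}(b,a)\wedge \exists^{\mathsf i}x\,(x\neq b)\big)\to \exists^{\mathsf i}x\,(x\neq a)$ and $\theta:=\exists^{\mathsf i}x\,\exists^{\mathsf i}y\,\neg(x=a\wedge y=b)$. Then: (1) $X\cup\{\eta\}\models_{\mathrm{id}}\theta$; and (2) for every finite $X_0\subseteq X$, $X_0\cup\{\eta\}\not\models_{\mathrm{id}}\theta$.
   Context: Inquisitive first-order logic InqBQ. A signature consists of predicate symbols and function symbols, each with an arity; function symbols are either rigid or non-rigid, and function symbols of arity $0$ are constant symbols. Terms are built from variables and function symbols as usual. Formulas are given by $\phi ::= P(t_1,\dots,t_n)\mid (t=t')\mid \bot\mid (\phi\wedge\phi)\mid(\phi\mathbin{\vee\!\!\!\vee}\phi)\mid(\phi\to\phi)\mid\forall x\phi\mid\exists^{\mathsf i}x\phi$, where $\mathbin{\vee\!\!\!\vee}$ is inquisitive disjunction and $\exists^{\mathsf i}$ is the inquisitive existential quantifier. Abbreviations: $\neg\phi:=\phi\to\bot$, $(t\neq t'):=\neg(t=t')$; the classical connectives $\vee,\exists$ are defined by $\phi\vee\psi:=\neg(\neg\phi\wedge\neg\psi)$, $\exists x\phi:=\neg\forall x\neg\phi$. Formulas without $\mathbin{\vee\!\!\!\vee}$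 and $\exists^{\mathsf i}$ are called classical. An id-model is a triple $M=(W,D,I)$ with $W$ a non-empty set of worlds, $D$ a non-empty domain, and $I$ assigning to each world $w$ an interpretation $I_w$ giving each $n$-ary predicate $P$ a relation $P_w\subseteq D^n$ and each $n$-ary function symbol $f$ a function $f_w:D^n\to D$ (rigid symbols get the same interpretation at every world); equality is interpreted as identity on $D$ at every world. Term values $[t]^g_w$ are defined as usual. Support of a formula at a state $s\subseteq W$ under an assignment $g$: $M,s\models_g P(t_1,\dots,t_n)$ iff $([t_1]^g_w,\dots,[t_n]^g_w)\in P_w$ for all $w\in s$; $M,s\models_g t=t'$ iff $[t]^g_w=[t']^g_w$ for all $w\in s$; $M,s\models_g\bot$ iff $s=\emptyset$; $\wedge$ is conjunction of support; $M,s\models_g\phi\mathbin{\vee\!\!\!\vee}\psi$ iff $M,s\models_g\phi$ or $M,s\models_g\psi$; $M,s\models_g\phi\to\psi$ iff for every $t\subseteq s$, $M,t\models_g\phi$ implies $M,t\models_g\psi$; $M,s\models_g\forall x\phi$ iff $M,s\models_{g[x\mapsto d]}\phi$ for all $d\in D$; $M,s\models_g\exists^{\mathsf i}x\phi$ iff $M,s\models_{g[x\mapsto d]}\phi$ for some $d\in D$. For a term $t$, $\lambda t:=\exists^{\mathsf i}x\,(x=t)$ with $x$ a variable not occurring in $t$, and $\mathrm{dep}(t,t'):=\lambda t\to\lambda t'$. id-entailment: $\Phi\models_{\mathrm{id}}\psi$ means that for every id-model $M$, state $s\subseteq W$ and assignment $g$, if $M,s\models_g\phi$ for all $\phi\in\Phi$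 then $M,s\models_g\psi$. *)

theory Defs
  imports Main
begin

datatype trm = Var nat | CA | CB

datatype fm =
    Eq trm trm
  | Bot
  | Conj fm fm
  | IOr fm fm
  | Imp fm fm
  | All nat fm
  | IEx nat fm

record ('w, 'd) idmodel =
  Wor :: "'w set"
  Dom :: "'d set"
  ia :: "'w \<Rightarrow> 'd"
  ib :: "'w \<Rightarrow> 'd"

definition wf_model :: "('w, 'd) idmodel \<Rightarrow> bool" where
  "wf_model M \<longleftrightarrow> Wor M \<noteq> {} \<and> Dom M \<noteq> {} \<and>
     (\<forall>w \<in> Wor M. ia M w \<in> Dom M \<and> ib M w \<in> Dom M)"

fun tval :: "('w, 'd) idmodel \<Rightarrow> 'w \<Rightarrow> (nat \<Rightarrow> 'd) \<Rightarrow> trm \<Rightarrow> 'd" where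
  "tval M w g (Var x) = g x"
| "tval M w g CA = ia M w"
| "tval M w g CB = ib M w"

fun supp :: "('w, 'd) idmodel \<Rightarrow> 'w set \<Rightarrow> (nat \<Rightarrow> 'd) \<Rightarrow> fm \<Rightarrow> bool" where
  "supp M s g (Eq t t') = (\<forall>w \<in> s. tval M w g t = tval M w g t')"
| "supp M s g Bot = (s = {})"
| "supp M s g (Conj p q) = (supp M s g p \<and> supp M s g q)"
| "supp M s g (IOr p q) = (supp M s g p \<or> supp M s g q)"
| "supp M s g (Imp p q) = (\<forall>t \<subseteq> s. supp M t g p \<longrightarrow> supp M t g q)"
| "supp M s g (All x p) = (\<forall>d \<in> Dom M. supp M s (g(x := d)) p)"
| "supp M s g (IEx x p) = (\<exists>d \<in> Dom M. supp M s (g(x := d)) p)"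

text \<open>id-entailment, relative to the types of worlds and domain elements
(the type arguments only fix the ambient HOL types; W and D are arbitrary
non-empty subsets of them).\<close>
definition id_entails :: "'w itself \<Rightarrow> 'd itself \<Rightarrow> fm set \<Rightarrow> fm \<Rightarrow> bool" where
  "id_entails _ _ \<Phi> \<psi> \<longleftrightarrow>
     (\<forall>(M :: ('w, 'd) idmodel) s g. wf_model M \<and> s \<subseteq> Wor M \<and> (\<forall>x. g x \<in> Dom M) \<and>
        (\<forall>\<phi> \<in> \<Phi>. supp M s g \<phi>) \<longrightarrow> supp M s g \<psi>)"

definition neg :: "fm \<Rightarrow> fm" where "neg p = Imp p Bot"
definition neq :: "trm \<Rightarrow> trm \<Rightarrow> fm" where "neq t t' = neg (Eq t t')"
definition cex :: "nat \<Rightarrow> fm \<Rightarrow> fm" where "cex x p = neg (All x (neg p))"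

text \<open>lambda t = iEx x (x = t), x not in t; for t = a or b any variable is fresh.\<close>
definition lam :: "trm \<Rightarrow> fm" where "lam t = IEx 0 (Eq (Var 0) t)"
definition dep :: "trm \<Rightarrow> trm \<Rightarrow> fm" where "dep t t' = Imp (lam t) (lam t')"

fun conjs :: "fm list \<Rightarrow> fm" where
  "conjs [] = neg Bot"
| "conjs (p # ps) = Conj p (conjs ps)"

fun cexs :: "nat list \<Rightarrow> fm \<Rightarrow> fm" where
  "cexs [] p = p"
| "cexs (x # xs) p = cex x (cexs xs p)"

definition chi :: "nat \<Rightarrow> fm" where
  "chi n = cexs [0..<n] (conjs [neq (Var i) (Var j). i \<leftarrow> [0..<n], j \<leftarrow> [0..<n], i < j])"

definition Xset :: "fm set" where "Xset = range chi"

definition eta :: fm where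
  "eta = Imp (Conj (Conj (dep CA CB) (dep CB CA)) (IEx 0 (neq (Var 0) CB)))
             (IEx 0 (neq (Var 0) CA))"

definition theta :: fm where
  "theta = IEx 0 (IEx 1 (neg (Conj (Eq (Var 0) CA) (Eq (Var 1) CB))))"

end

theory Submission
  imports Defs
begin

fun ct :: "('w, 'd) idmodel \<Rightarrow> 'w \<Rightarrow> (nat \<Rightarrow> 'd) \<Rightarrow> fm \<Rightarrow> bool" where
  "ct M w g (Eq t t') = (tval M w g t = tval M w g t')"
| "ct M w g Bot = False"
| "ct M w g (Conj p q) = (ct M w g p \<and> ct M w g q)"
| "ct M w g (IOr p q) = (ct M w g p \<or> ct M w g q)"
| "ct M w g (Imp p q) = (ct M w g p \<longrightarrow> ct M w g q)"
| "ct M w g (All x p) = (\<forall>d \<in> Dom M. ct M w (g(x := d)) p)"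
| "ct M w g (IEx x p) = (\<exists>d \<in> Dom M. ct M w (g(x := d)) p)"

fun classical :: "fm \<Rightarrow> bool" where
  "classical (Eq t t') = True"
| "classical Bot = True"
| "classical (Conj p q) = (classical p \<and> classical q)"
| "classical (IOr p q) = False"
| "classical (Imp p q) = (classical p \<and> classical q)"
| "classical (All x p) = classical p"
| "classical (IEx x p) = False"

lemma supp_classical:
  "classical p \<Longrightarrow> supp M s g p = (\<forall>w\<in>s. ct M w g p)"
proof (induction p arbitrary: s g)
  case (Imp p q)
  then have IH1: "\<And>s. supp M s g p = (\<forall>w\<in>s. ct M w g p)"
    and IH2: "\<And>s. supp M s g q = (\<forall>w\<in>s. ct M w g q)" by auto
  show ?case
  proof
    assume H: "supp M s g (Imp p q)"
    show "\<forall>w\<in>s. ct M w g (Imp p q)"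
    proof
      fix w assume "w \<in> s"
      then have "{w} \<subseteq> s" by auto
      with H show "ct M w g (Imp p q)" by (auto simp: IH1 IH2)
    qed
  next
    assume "\<forall>w\<in>s. ct M w g (Imp p q)"
    then show "supp M s g (Imp p q)" by (auto simp: IH1 IH2)
  qed
qed auto

lemma supp_empty: "Dom M \<noteq> {} \<Longrightarrow> supp M {} g p"
  by (induction p arbitrary: g) auto

lemma classical_chi: "classical (chi n)"
proof -
  have c1: "\<And>ps. (\<forall>p\<in>set ps. classical p) \<Longrightarrow> classical (conjs ps)"
  proof -
    fix ps show "(\<forall>p\<in>set ps. classical p) \<Longrightarrow> classical (conjs ps)"
      by (induction ps) (auto simp: neg_def)
  qed
  have c2: "\<And>xs p. classical p \<Longrightarrow> classical (cexs xs p)"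
  proof -
    fix xs p show "classical p \<Longrightarrow> classical (cexs xs p)"
      by (induction xs) (auto simp: cex_def neg_def)
  qed
  show ?thesis unfolding chi_def
    by (rule c2, rule c1) (auto simp: neq_def neg_def)
qed

lemma ct_conjs: "ct M w g (conjs ps) = (\<forall>p\<in>set ps. ct M w g p)"
  by (induction ps) (auto simp: neg_def)

lemma ct_cexs:
  "ct M w g (cexs xs p) = (\<exists>g'. (\<forall>x\<in>set xs. g' x \<in> Dom M) \<and> (\<forall>y. y \<notin> set xs \<longrightarrow> g' y = g y) \<and> ct M w g' p)"
proof (induction xs arbitrary: g)
  case Nil
  have "(\<forall>y. g' y = g y) \<Longrightarrow> g' = g" for g' :: "nat \<Rightarrow> 'b" by (rule ext) simp
  then show ?case by auto
next
  case (Cons x xs)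
  show ?case
  proof
    assume "ct M w g (cexs (x # xs) p)"
    then obtain d where d: "d \<in> Dom M" and "ct M w (g(x:=d)) (cexs xs p)"
      by (auto simp: cex_def neg_def)
    with Cons obtain g' where "\<forall>x\<in>set xs. g' x \<in> Dom M" "\<forall>y. y \<notin> set xs \<longrightarrow> g' y = (g(x:=d)) y"
      "ct M w g' p" by blast
    then show "\<exists>g'. (\<forall>x\<in>set (x # xs). g' x \<in> Dom M) \<and> (\<forall>y. y \<notin> set (x # xs) \<longrightarrow> g' y = g y) \<and> ct M w g' p"
      using d by (intro exI[of _ g']) (auto split: if_splits)
  next
    assume "\<exists>g'. (\<forall>x\<in>set (x # xs). g' x \<in> Dom M) \<and> (\<forall>y. y \<notin> set (x # xs) \<longrightarrow> g' y = g y) \<and> ct M w g' p"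
    then obtain g' where A: "\<forall>x\<in>set (x # xs). g' x \<in> Dom M" "\<forall>y. y \<notin> set (x # xs) \<longrightarrow> g' y = g y" "ct M w g' p"
      by blast
    have "ct M w (g(x := g' x)) (cexs xs p)"
      using A by (subst Cons) (intro exI[of _ g'], auto)
    then show "ct M w g (cexs (x # xs) p)" using A by (auto simp: cex_def neg_def)
  qed
qed

lemma ct_chi: "ct M w g (chi n) = (\<exists>h. h ` {0..<n} \<subseteq> Dom M \<and> inj_on h {0..<n})"
proof
  assume "ct M w g (chi n)"
  then obtain g' where A: "\<forall>x\<in>{0..<n}. g' x \<in> Dom M"
     "ct M w g' (conjs [neq (Var i) (Var j). i \<leftarrow> [0..<n], j \<leftarrow> [0..<n], i < j])"
    unfolding chi_def ct_cexs by auto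
  then have B: "\<forall>i<n. \<forall>j<n. i < j \<longrightarrow> g' i \<noteq> g' j"
    by (auto simp: ct_conjs neq_def neg_def)
  have "inj_on g' {0..<n}"
  proof (rule inj_onI)
    fix i j assume "i \<in> {0..<n}" "j \<in> {0..<n}" "g' i = g' j"
    then show "i = j" using B by (metis atLeastLessThan_iff linorder_neqE_nat)
  qed
  then show "\<exists>h. h ` {0..<n} \<subseteq> Dom M \<and> inj_on h {0..<n}" using A by auto
next
  assume "\<exists>h. h ` {0..<n} \<subseteq> Dom M \<and> inj_on h {0..<n}"
  then obtain h where h: "h ` {0..<n} \<subseteq> Dom M" "inj_on h {0..<n}" by blast
  define g' where "g' = (\<lambda>y. if y < n then h y else g y)"
  have "ct M w g' (conjs [neq (Var i) (Var j). i \<leftarrow> [0..<n], j \<leftarrow> [0..<n], i < j])"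
    using h unfolding ct_conjs
    by (auto simp: neq_def neg_def g'_def inj_on_def)
  then show "ct M w g (chi n)" unfolding chi_def ct_cexs
    using h by (intro exI[of _ g']) (auto simp: g'_def)
qed


lemma supp_theta:
  "supp M s g theta = (\<exists>d1\<in>Dom M. \<exists>d2\<in>Dom M. \<forall>w\<in>s. \<not>(d1 = ia M w \<and> d2 = ib M w))"
  unfolding theta_def by (simp del: supp.simps add: supp.simps(7) supp_classical neg_def)

lemma supp_neqex:
  "supp M s g (IEx 0 (neq (Var 0) t)) = (\<exists>d\<in>Dom M. \<forall>w\<in>s. d \<noteq> tval M w (g(0:=d)) t)"
  by (simp del: supp.simps add: supp.simps(7) supp_classical neq_def neg_def)

lemma supp_dep:
  "supp M s g (dep t1 t2) = (\<forall>s'\<subseteq>s. (\<exists>d\<in>Dom M. \<forall>w\<in>s'. d = tval M w (g(0:=d)) t1)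
      \<longrightarrow> (\<exists>d\<in>Dom M. \<forall>w\<in>s'. d = tval M w (g(0:=d)) t2))"
  by (simp add: dep_def lam_def)

lemma infinite_nonsurj:
  assumes "infinite (D :: 'd set)"
  shows "\<exists>f c. inj_on f D \<and> f ` D \<subseteq> D \<and> c \<in> D \<and> c \<notin> f ` D"
proof -
  obtain h :: "nat \<Rightarrow> 'd" where h: "inj h" "range h \<subseteq> D"
    using infinite_countable_subset[OF assms] by blast
  define f where "f d = (if d \<in> range h then h (Suc (inv h d)) else d)" for d
  have "inj_on f D"
  proof (rule inj_onI)
    fix x y assume "x \<in> D" "y \<in> D" "f x = f y"
    then show "x = y" using h unfolding f_def
      by (auto split: if_splits simp: inj_eq) 
  qed
  moreover have "f ` D \<subseteq> D" using h by (auto simp: f_def)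
  moreover have "h 0 \<in> D" using h by auto
  moreover have "h 0 \<notin> f ` D" using h by (auto simp: f_def inj_eq)
  ultimately show ?thesis by blast
qed

lemma part1:
  assumes wf: "wf_model M" and sW: "s \<subseteq> Wor M" and chis: "\<forall>n. supp M s g (chi n)"
    and et: "supp M s g eta"
  shows "supp M s g theta"
proof (cases "s = {}")
  case True
  have "Dom M \<noteq> {}" using wf by (simp add: wf_model_def)
  then show ?thesis using True supp_empty[of M] by simp
next
  case False
  then obtain w0 where "w0 \<in> s" by auto
  have inf: "infinite (Dom M)"
  proof
    assume fin: "finite (Dom M)"
    have "supp M s g (chi (Suc (card (Dom M))))" using chis by (rule spec)
    then have "ct M w0 g (chi (Suc (card (Dom M))))"
      using \<open>w0 \<in> s\<close> unfolding supp_classical[OF classical_chi] by (rule bspec)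
    then obtain h where h: "h ` {0..<Suc (card (Dom M))} \<subseteq> Dom M" "inj_on h {0..<Suc (card (Dom M))}"
      unfolding ct_chi by blast
    from card_inj_on_le[OF h(2) h(1) fin] show False by simp
  qed
  obtain f c where f: "inj_on f (Dom M)" "f ` Dom M \<subseteq> Dom M" "c \<in> Dom M" "c \<notin> f ` Dom M"
    using infinite_nonsurj[OF inf] by blast
  show ?thesis
  proof (rule ccontr)
    assume nt: "\<not> supp M s g theta"
    have ex: "\<exists>w\<in>s. ia M w = d1 \<and> ib M w = d2" if "d1 \<in> Dom M" "d2 \<in> Dom M" for d1 d2
    proof -
      have "\<forall>d1\<in>Dom M. \<forall>d2\<in>Dom M. \<exists>w\<in>s. d1 = ia M w \<and> d2 = ib M w"
        using nt unfolding supp_theta by auto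
      then have "\<exists>w\<in>s. d1 = ia M w \<and> d2 = ib M w" using that by (simp only: Ball_def)
      then obtain w where "w \<in> s" "d1 = ia M w \<and> d2 = ib M w" by (rule bexE)
      then show ?thesis by (intro bexI[of _ w]) simp_all
    qed
    define pick where "pick d = (SOME w. w \<in> s \<and> ia M w = d \<and> ib M w = f d)" for d
    have pk: "pick d \<in> s \<and> ia M (pick d) = d \<and> ib M (pick d) = f d" if "d \<in> Dom M" for d
    proof -
      have "f d \<in> Dom M" using f(2) that by blast
      from ex[OF that this] have "\<exists>w. w \<in> s \<and> ia M w = d \<and> ib M w = f d" by (simp only: Bex_def)
      then show ?thesis unfolding pick_def by (rule someI_ex)
    qed
    define t where "t = pick ` Dom M"
    have ts: "t \<subseteq> s" using pk by (auto simp: t_def)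
    have tW: "\<And>w. w \<in> t \<Longrightarrow> ia M w \<in> Dom M \<and> ib M w \<in> Dom M"
      using ts sW wf by (auto simp: wf_model_def)
    have ab: "ia M w = ia M v \<longleftrightarrow> ib M w = ib M v" if "w \<in> t" "v \<in> t" for w v
      using that pk f(1) unfolding t_def inj_on_def by auto
    have dne: "Dom M \<noteq> {}" using wf by (auto simp: wf_model_def)
    have d1: "supp M t g (dep CA CB)" unfolding supp_dep
    proof (intro allI impI)
      fix s' assume "s' \<subseteq> t" and "\<exists>d\<in>Dom M. \<forall>w\<in>s'. d = tval M w (g(0 := d)) CA"
      show "\<exists>d\<in>Dom M. \<forall>w\<in>s'. d = tval M w (g(0 := d)) CB"
      proof (cases "s' = {}")
        case True then show ?thesis using dne by auto
      next
        case False
        then obtain v where "v \<in> s'" by auto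
        from \<open>\<exists>d\<in>Dom M. \<forall>w\<in>s'. d = tval M w (g(0 := d)) CA\<close>
        obtain d where dd: "\<forall>w\<in>s'. d = ia M w" by auto
        have "\<forall>w\<in>s'. ib M v = ib M w"
        proof
          fix w assume "w \<in> s'"
          from dd this have e1: "d = ia M w" by (rule bspec)
          from dd \<open>v \<in> s'\<close> have e2: "d = ia M v" by (rule bspec)
          have "ia M w = ia M v" by (simp only: e1[symmetric] e2[symmetric])
          moreover have "w \<in> t" "v \<in> t" using \<open>w \<in> s'\<close> \<open>v \<in> s'\<close> \<open>s' \<subseteq> t\<close> by auto
          ultimately show "ib M v = ib M w" using ab by metis
        qed
        moreover have "ib M v \<in> Dom M" using tW \<open>v \<in> s'\<close> \<open>s' \<subseteq> t\<close> by auto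
        ultimately show ?thesis by auto
      qed
    qed
    have d2: "supp M t g (dep CB CA)" unfolding supp_dep
    proof (intro allI impI)
      fix s' assume "s' \<subseteq> t" and "\<exists>d\<in>Dom M. \<forall>w\<in>s'. d = tval M w (g(0 := d)) CB"
      show "\<exists>d\<in>Dom M. \<forall>w\<in>s'. d = tval M w (g(0 := d)) CA"
      proof (cases "s' = {}")
        case True then show ?thesis using dne by auto
      next
        case False
        then obtain v where "v \<in> s'" by auto
        from \<open>\<exists>d\<in>Dom M. \<forall>w\<in>s'. d = tval M w (g(0 := d)) CB\<close>
        obtain d where dd: "\<forall>w\<in>s'. d = ib M w" by auto
        have "\<forall>w\<in>s'. ia M v = ia M w"
        proof
          fix w assume "w \<in> s'"
          from dd this have e1: "d = ib M w" by (rule bspec)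
          from dd \<open>v \<in> s'\<close> have e2: "d = ib M v" by (rule bspec)
          have "ib M w = ib M v" by (simp only: e1[symmetric] e2[symmetric])
          moreover have "w \<in> t" "v \<in> t" using \<open>w \<in> s'\<close> \<open>v \<in> s'\<close> \<open>s' \<subseteq> t\<close> by auto
          ultimately show "ia M v = ia M w" using ab by metis
        qed
        moreover have "ia M v \<in> Dom M" using tW \<open>v \<in> s'\<close> \<open>s' \<subseteq> t\<close> by auto
        ultimately show ?thesis by auto
      qed
    qed
    have d3: "supp M t g (IEx 0 (neq (Var 0) CB))" unfolding supp_neqex
      using f(3,4) pk by (intro bexI[of _ c]) (auto simp: t_def)
    have "supp M t g (IEx 0 (neq (Var 0) CA))"
      using et ts d1 d2 d3 unfolding eta_def by auto
    then obtain d where "d \<in> Dom M" "\<forall>w\<in>t. d \<noteq> ia M w" unfolding supp_neqex by auto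
    then show False using pk[of d] by (auto simp: t_def)
  qed
qed


definition Mm :: "nat \<Rightarrow> (nat, nat) idmodel" where
  "Mm m = \<lparr>Wor = {..<m*m}, Dom = {..<m}, ia = (\<lambda>w. w div m), ib = (\<lambda>w. w mod m)\<rparr>"

lemma eta_Mm:
  assumes m: "0 < m" and sW: "s \<subseteq> {..<m*m}"
  shows "supp (Mm m) s g eta"
  unfolding eta_def supp.simps(5)
proof (intro allI impI)
  let ?M = "Mm m"
  fix t assume "t \<subseteq> s" and A: "supp ?M t g (Conj (Conj (dep CA CB) (dep CB CA)) (IEx 0 (neq (Var 0) CB)))"
  have D1: "supp ?M t g (dep CA CB)" and D2: "supp ?M t g (dep CB CA)"
    and D3: "supp ?M t g (IEx 0 (neq (Var 0) CB))" using A by auto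
  have ab: "ia ?M w = ia ?M v \<Longrightarrow> ib ?M w = ib ?M v" if "w \<in> t" "v \<in> t" for w v
  proof -
    assume "ia ?M w = ia ?M v"
    then have "\<exists>d\<in>Dom ?M. \<forall>u\<in>{w,v}. d = tval ?M u (g(0:=d)) CA"
      using that \<open>t \<subseteq> s\<close> sW by (auto simp: Mm_def less_mult_imp_div_less intro!: bexI[of _ "w div m"] m)
    moreover have "{w,v} \<subseteq> t" using that by simp
    moreover from D1 have "\<forall>s'\<subseteq>t. (\<exists>d\<in>Dom ?M. \<forall>w\<in>s'. d = tval ?M w (g(0:=d)) CA)
      \<longrightarrow> (\<exists>d\<in>Dom ?M. \<forall>w\<in>s'. d = tval ?M w (g(0:=d)) CB)" by (simp only: supp_dep)
    ultimately have "\<exists>d\<in>Dom ?M. \<forall>u\<in>{w,v}. d = tval ?M u (g(0:=d)) CB"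
      by (meson)
    then show ?thesis by auto
  qed
  have ba: "ib ?M w = ib ?M v \<Longrightarrow> ia ?M w = ia ?M v" if "w \<in> t" "v \<in> t" for w v
  proof -
    assume "ib ?M w = ib ?M v"
    then have "\<exists>d\<in>Dom ?M. \<forall>u\<in>{w,v}. d = tval ?M u (g(0:=d)) CB"
      using m by (auto simp: Mm_def intro!: bexI[of _ "w mod m"])
    moreover have "{w,v} \<subseteq> t" using that by simp
    moreover from D2 have "\<forall>s'\<subseteq>t. (\<exists>d\<in>Dom ?M. \<forall>w\<in>s'. d = tval ?M w (g(0:=d)) CB)
      \<longrightarrow> (\<exists>d\<in>Dom ?M. \<forall>w\<in>s'. d = tval ?M w (g(0:=d)) CA)" by (simp only: supp_dep)
    ultimately have "\<exists>d\<in>Dom ?M. \<forall>u\<in>{w,v}. d = tval ?M u (g(0:=d)) CA"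
      by (meson)
    then show ?thesis by auto
  qed
  from D3 obtain c where c: "c < m" "\<forall>w\<in>t. c \<noteq> w mod m"
    unfolding supp_neqex by (auto simp: Mm_def)
  show "supp ?M t g (IEx 0 (neq (Var 0) CA))"
  proof (rule ccontr)
    assume "\<not> supp ?M t g (IEx 0 (neq (Var 0) CA))"
    then have "\<forall>d\<in>{..<m}. \<exists>w\<in>t. d = w div m" unfolding supp_neqex by (auto simp: Mm_def)
    then have sur: "\<forall>d<m. \<exists>w\<in>t. w div m = d"
    proof (intro allI impI)
      fix d assume "\<forall>d\<in>{..<m}. \<exists>w\<in>t. d = w div (m::nat)" and "d < m"
      then obtain w where "w \<in> t" "d = w div m" by auto
      then show "\<exists>w\<in>t. w div m = d" by auto
    qed
    define pk where "pk d = (SOME w. w \<in> t \<and> w div m = d)" for d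
    have pk: "pk d \<in> t \<and> pk d div m = d" if "d < m" for d
    proof -
      have "\<exists>w\<in>t. w div m = d" using sur that by (simp only: all_simps(6)[symmetric])
      then have "\<exists>w. w \<in> t \<and> w div m = d" by (simp only: Bex_def)
      then show ?thesis unfolding pk_def by (rule someI_ex)
    qed
    define h where "h d = pk d mod m" for d
    have "inj_on h {..<m}"
    proof (rule inj_onI)
      fix x y assume "x \<in> {..<m}" "y \<in> {..<m}" "h x = h y"
      have px: "pk x \<in> t" "pk x div m = x" using pk \<open>x \<in> {..<m}\<close> by auto
      have py: "pk y \<in> t" "pk y div m = y" using pk \<open>y \<in> {..<m}\<close> by auto
      have "ib ?M (pk x) = ib ?M (pk y)" using \<open>h x = h y\<close> by (simp add: h_def Mm_def)
      then have "ia ?M (pk x) = ia ?M (pk y)" by (rule ba[OF px(1) py(1)])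
      then show "x = y" using px py by (simp add: Mm_def)
    qed
    moreover have "h ` {..<m} \<subseteq> {..<m} - {c}"
      using pk c m unfolding h_def by auto
    ultimately have "card {..<m} \<le> card ({..<m} - {c})"
      by (intro card_inj_on_le) auto
    then show False using c by simp
  qed
qed

lemma part2:
  assumes "X0 \<subseteq> chi ` {..N}"
  shows "\<not> id_entails TYPE(nat) TYPE(nat) (X0 \<union> {eta}) theta"
proof
  assume E: "id_entails TYPE(nat) TYPE(nat) (X0 \<union> {eta}) theta"
  define m where "m = Suc N"
  have m: "0 < m" by (simp add: m_def)
  let ?M = "Mm m"
  let ?s = "{..<m*m}"
  let ?g = "\<lambda>_::nat. 0::nat"
  have wf: "wf_model ?M"
    proof -
    have ne: "{..<m*m} \<noteq> {}" using m by (metis lessThan_iff mult_pos_pos empty_iff)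
    have "\<forall>w\<in>{..<m*m}. w div m < m \<and> w mod m < m" using m by (auto simp: less_mult_imp_div_less)
    moreover have "{..<m} \<noteq> {}" using m by auto
    ultimately show ?thesis using ne unfolding wf_model_def Mm_def by simp
  qed
  have chis: "supp ?M ?s ?g (chi n)" if "n \<le> N" for n
  proof -
    have "ct ?M w ?g (chi n)" for w
      unfolding ct_chi using that by (intro exI[of _ id]) (auto simp: Mm_def m_def)
    then show ?thesis using supp_classical[OF classical_chi] by blast
  qed
  have "\<forall>\<phi>\<in>X0 \<union> {eta}. supp ?M ?s ?g \<phi>"
    using assms chis eta_Mm[OF m order_refl] by auto
  then have "supp ?M ?s ?g theta" using E wf m unfolding id_entails_def
    by (auto simp: Mm_def)
  then obtain d1 d2 where "d1 < m" "d2 < m" "\<forall>w<m*m. \<not>(d1 = w div m \<and> d2 = w mod m)"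
    unfolding supp_theta by (auto simp: Mm_def)
  moreover have "d1 * m + d2 < m * m"
  proof -
    have "d1 * m + d2 < d1 * m + m" using \<open>d2 < m\<close> by simp
    also have "\<dots> = Suc d1 * m" by simp
    also have "\<dots> \<le> m * m" using \<open>d1 < m\<close> by (metis Suc_leI mult_le_mono1)
    finally show ?thesis .
  qed
  ultimately show False using m by auto
qed

theorem mainTheorem3:
  shows "id_entails TYPE('w) TYPE('d) (Xset \<union> {eta}) theta \<and>
         (\<forall>X0. finite X0 \<and> X0 \<subseteq> Xset \<longrightarrow>
           \<not> id_entails TYPE(nat) TYPE(nat) (X0 \<union> {eta}) theta)"
proof
  show "id_entails TYPE('w) TYPE('d) (Xset \<union> {eta}) theta"
    unfolding id_entails_def Xset_def using part1 by blast
next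
  show "\<forall>X0. finite X0 \<and> X0 \<subseteq> Xset \<longrightarrow> \<not> id_entails TYPE(nat) TYPE(nat) (X0 \<union> {eta}) theta"
  proof (intro allI impI)
    fix X0 assume "finite X0 \<and> X0 \<subseteq> Xset"
    then obtain F where F: "finite F" "X0 = chi ` F"
      unfolding Xset_def by (meson finite_subset_image)
    have "X0 \<subseteq> chi ` {..sum id F}"
      using F member_le_sum[of _ F id] by fastforce
    then show "\<not> id_entails TYPE(nat) TYPE(nat) (X0 \<union> {eta}) theta" by (rule part2)
  qed
qed

end
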